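(* Let $d\in\mathbb{Z}^+$, $f\in\{0,\dots,d-1\}$, let $C_0\in\mathcal{C}_{\le d}$ be irreducible and let $B\subseteq\mathbb{R}^2$ with $|B|\le\binom{d+2}{2}-1$. Then for all $(e,D)\in I(B,C_0)$, \[ |C_0\cap U_e(B,D)|\le 2d^2. \]
   Context: For $k\in\mathbb{Z}^+$, a curve of degree $k$ is the zero set in $\mathbb{R}^2$ of a polynomial in $\mathbb{R}[x,y]$ of degree exactly $k$; $\mathcal{C}_k$ is the family of such curves and $\mathcal{C}_{\le k}:=\bigcup_{j=1}^k\mathcal{C}_j$. A curve is irreducible if it is the zero set of an irreducible polynomial. For $k\in\mathbb{Z}^+$ let $I_k=\{(i,j)\in\mathbb{Z}_{\ge 0}^2: 1\le i+j\le k\}$ and $\psi_k:\mathbb{R}^2\to\mathbb{R}^{\binom{k+2}{2}-1}$, $\psi_k(a_1,a_2)=(a_1^ia_2^j)_{(i,j)\in I_k}$. $\mathrm{Fl}(S)$ is the affine hull of $S$ ($\mathrm{Fl}(\emptyset)=\emptyset$, $\dim\emptyset=-1$); $\mathcal{P}(X)$ is the power set. With $d$ fixed, for $e\in\{1,\dots,d-1\}$, $B\subseteq\mathbb{R}^2$, $D\subseteq B$: $V_e(D):=\mathrm{Fl}(\psi_e(D))$; $V_d(B):=\mathrm{Fl}(\psi_d(B))$; $W_e(B,D):=\mathrm{Fl}\big(\psi_{d-e}(B\setminus\psi_e^{-1}(V_e(D)))\big)$; $\alpha_e(D):=\binom{e+2}{2}-2-\dim V_e(D)$; $\beta_e(B,D):=\binom{d-e+2}{2}-3-\dim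 W_e(B,D)$; $U_e(B,D):=\psi_d^{-1}(V_d(B))$ if $\alpha_e(D)<0$; $:=\psi_d^{-1}(V_d(B))\cup\psi_e^{-1}(V_e(D))$ if $\beta_e(B,D)<0\le\alpha_e(D)$; $:=\psi_d^{-1}(V_d(B))\cup\psi_e^{-1}(V_e(D))\cup\psi_{d-e}^{-1}(W_e(B,D))$ if $\alpha_e(D),\beta_e(B,D)\ge0$; and for $C\subseteq\mathbb{R}^2$, $I(B,C):=\{(f',E)\in\{1,\dots,d-1\}\times\mathcal{P}(B): C\not\subseteq U_{f'}(B,E)\}$. *)

theory Defs
  imports "HOL-Analysis.Analysis" "HOL-Computational_Algebra.Polynomial"
begin

(* Bivariate real polynomials, represented as R[x][y] = real poly poly
   (outer variable y, coefficients are polynomials in x). *)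
type_synonym bpoly = "real poly poly"

definition bpeval :: "bpoly \<Rightarrow> real \<Rightarrow> real \<Rightarrow> real" where
  "bpeval p a b = poly (map_poly (\<lambda>c. poly c a) p) b"

(* total degree (for p \<noteq> 0) *)
definition totdeg :: "bpoly \<Rightarrow> nat" where
  "totdeg p = Max {i + j | i j. coeff (coeff p j) i \<noteq> 0}"

definition zero_set :: "bpoly \<Rightarrow> (real \<times> real) set" where
  "zero_set p = {(a, b). bpeval p a b = 0}"

definition curves_deg :: "nat \<Rightarrow> (real \<times> real) set set" where
  "curves_deg k = {S. \<exists>p. p \<noteq> 0 \<and> totdeg p = k \<and> S = zero_set p}"

definition curves_le :: "nat \<Rightarrow> (real \<times> real) set set" where
  "curves_le k = (\<Union>j\<in>{1..k}. curves_deg j)"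

definition irreducible_curve :: "(real \<times> real) set \<Rightarrow> bool" where
  "irreducible_curve S \<longleftrightarrow> (\<exists>p. irreducible p \<and> S = zero_set p)"

(* Vectors in R^{I_k} are represented as functions nat \<times> nat \<Rightarrow> real
   vanishing outside I_k. *)
type_synonym vect = "nat \<times> nat \<Rightarrow> real"

definition psi :: "nat \<Rightarrow> real \<times> real \<Rightarrow> vect" where
  "psi k a = (\<lambda>(i, j). if 1 \<le> i + j \<and> i + j \<le> k then fst a ^ i * snd a ^ j else 0)"

definition Fl :: "vect set \<Rightarrow> vect set" where
  "Fl S = {x. \<exists>T u. finite T \<and> T \<subseteq> S \<and> sum u T = 1 \<and>
                    x = (\<lambda>i. \<Sum>v\<in>T. u v * v i)}"

definition lin_indep :: "vect set \<Rightarrow> bool" where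
  "lin_indep T \<longleftrightarrow> (\<forall>u. (\<lambda>i. \<Sum>v\<in>T. u v * v i) = (\<lambda>i. 0) \<longrightarrow> (\<forall>v\<in>T. u v = 0))"

definition affdim :: "vect set \<Rightarrow> int" where
  "affdim A = (if A = {} then -1 else
     int (GREATEST n. \<exists>T. finite T \<and> card T = n \<and> lin_indep T \<and>
                         T \<subseteq> {(\<lambda>i. x i - y i) | x y. x \<in> A \<and> y \<in> A}))"

definition Vset :: "nat \<Rightarrow> (real \<times> real) set \<Rightarrow> vect set" where
  "Vset e D = Fl (psi e ` D)"

definition Wset :: "nat \<Rightarrow> nat \<Rightarrow> (real \<times> real) set \<Rightarrow> (real \<times> real) set \<Rightarrow> vect set" where
  "Wset d e B D = Fl (psi (d - e) ` (B - psi e -` Vset e D))"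

definition alpha :: "nat \<Rightarrow> (real \<times> real) set \<Rightarrow> int" where
  "alpha e D = int ((e + 2) choose 2) - 2 - affdim (Vset e D)"

definition beta :: "nat \<Rightarrow> nat \<Rightarrow> (real \<times> real) set \<Rightarrow> (real \<times> real) set \<Rightarrow> int" where
  "beta d e B D = int ((d - e + 2) choose 2) - 3 - affdim (Wset d e B D)"

definition Uset :: "nat \<Rightarrow> nat \<Rightarrow> (real \<times> real) set \<Rightarrow> (real \<times> real) set \<Rightarrow> (real \<times> real) set" where
  "Uset d e B D =
     (if alpha e D < 0 then psi d -` Vset d B
      else if beta d e B D < 0 then psi d -` Vset d B \<union> psi e -` Vset e D
      else psi d -` Vset d B \<union> psi e -` Vset e D \<union> psi (d - e) -` Wset d e B D)"

definition Iset :: "nat \<Rightarrow> (real \<times> real) set \<Rightarrow> (real \<times> real) set \<Rightarrow> (nat \<times> (real \<times> real) set) set" where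
  "Iset d B C = {(f', E). f' \<in> {1..d - 1} \<and> E \<subseteq> B \<and> \<not> C \<subseteq> Uset d f' B E}"

end

theory Submission
  imports Defs "HOL-Library.Function_Algebras" "HOL-Computational_Algebra.Polynomial_Factorial" "HOL-Computational_Algebra.Field_as_Ring"
begin


lemma bpeval_alt: "bpeval p a b = poly (poly p [:b:]) a"
  unfolding bpeval_def
  by (induction p) (auto simp: map_poly_pCons)

lemma bpeval_mult[simp]: "bpeval (p * q) a b = bpeval p a b * bpeval q a b"
  by (simp add: bpeval_alt)
lemma bpeval_add[simp]: "bpeval (p + q) a b = bpeval p a b + bpeval q a b"
  by (simp add: bpeval_alt)
lemma bpeval_diff[simp]: "bpeval (p - q) a b = bpeval p a b - bpeval q a b"
  by (simp add: bpeval_alt)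
lemma bpeval_minus[simp]: "bpeval (- p) a b = - bpeval p a b"
  by (simp add: bpeval_alt)
lemma bpeval_0[simp]: "bpeval 0 a b = 0"
  by (simp add: bpeval_alt)
lemma bpeval_1[simp]: "bpeval 1 a b = 1"
  by (simp add: bpeval_alt)
lemma bpeval_smult[simp]: "bpeval (smult [:c:] p) a b = c * bpeval p a b"
  by (simp add: bpeval_alt)
lemma bpeval_sum: "bpeval (sum f S) a b = (\<Sum>x\<in>S. bpeval (f x) a b)"
  by (induction S rule: infinite_finite_induct) auto
lemma bpeval_prod: "bpeval (prod f S) a b = (\<Prod>x\<in>S. bpeval (f x) a b)"
  by (induction S rule: infinite_finite_induct) auto
lemma bpeval_const[simp]: "bpeval [:[:c:]:] a b = c"
  by (simp add: bpeval_alt)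

definition cf :: "bpoly \<Rightarrow> nat \<Rightarrow> nat \<Rightarrow> real" where
  "cf p i j = coeff (coeff p j) i"

definition mono :: "nat \<Rightarrow> nat \<Rightarrow> bpoly" where
  "mono i j = monom (monom 1 i) j"

lemma bpeval_mono[simp]: "bpeval (mono i j) a b = a ^ i * b ^ j"
  by (simp add: bpeval_def mono_def map_poly_monom poly_monom)

lemma cf_mono: "cf (mono i j) i' j' = (if i = i' \<and> j = j' then 1 else 0)"
  by (auto simp: cf_def mono_def coeff_monom)

lemma cf_add[simp]: "cf (p + q) i j = cf p i j + cf q i j"
  by (simp add: cf_def)
lemma cf_smult[simp]: "cf (smult [:c:] p) i j = c * cf p i j"
  by (simp add: cf_def)
lemma cf_sum: "cf (sum f S) i j = (\<Sum>x\<in>S. cf (f x) i j)"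
  by (induction S rule: infinite_finite_induct) (auto simp: cf_def)
lemma cf_0[simp]: "cf 0 i j = 0"
  by (simp add: cf_def)

lemma poly_eq_cf: "p = q \<longleftrightarrow> (\<forall>i j. cf p i j = cf q i j)"
  by (auto simp: cf_def poly_eq_iff)

lemma cf_nonzero_ex: "p \<noteq> 0 \<Longrightarrow> \<exists>i j. cf p i j \<noteq> 0"
  using poly_eq_cf[of p 0] by auto

lemma cf_mult: "cf (p * q) i j =
  (\<Sum>j1\<le>j. \<Sum>i1\<le>i. cf p i1 j1 * cf q (i - i1) (j - j1))"
  by (simp add: cf_def coeff_mult coeff_sum)

definition deg_le :: "bpoly \<Rightarrow> nat \<Rightarrow> bool" where
  "deg_le p n \<longleftrightarrow> (\<forall>i j. cf p i j \<noteq> 0 \<longrightarrow> i + j \<le> n)"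

lemma supp_finite: "finite {(i, j). cf p i j \<noteq> 0}"
proof -
  let ?M = "Max (degree ` coeff p ` {..degree p})"
  have *: "i \<le> ?M \<and> j \<le> degree p" if h: "cf p i j \<noteq> 0" for i j
  proof -
    from h have j: "j \<le> degree p" unfolding cf_def
      by (metis coeff_0 le_degree)
    have "i \<le> degree (coeff p j)" using h unfolding cf_def by (metis le_degree)
    also have "\<dots> \<le> ?M" using j by (intro Max_ge) auto
    finally show ?thesis using j by simp
  qed
  have "{(i, j). cf p i j \<noteq> 0} \<subseteq> {..?M} \<times> {..degree p}"
    using * by auto
  then show ?thesis by (rule finite_subset) auto
qed

lemma totdeg_set_eq: "{i + j | i j. cf p i j \<noteq> 0} = (\<lambda>(i,j). i + j) ` {(i, j). cf p i j \<noteq> 0}"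
  by auto

lemma totdeg_cf: "totdeg p = Max {i + j | i j. cf p i j \<noteq> 0}"
  by (simp add: totdeg_def cf_def)

lemma totdeg_set_finite: "finite {i + j | i j. cf p i j \<noteq> 0}"
  unfolding totdeg_set_eq using supp_finite by blast

lemma cf_le_totdeg: "cf p i j \<noteq> 0 \<Longrightarrow> i + j \<le> totdeg p"
  unfolding totdeg_cf using totdeg_set_finite by (intro Max_ge) auto

lemma deg_le_totdeg: "deg_le p (totdeg p)"
  using cf_le_totdeg deg_le_def by blast

lemma totdeg_attained: "p \<noteq> 0 \<Longrightarrow> \<exists>i j. cf p i j \<noteq> 0 \<and> i + j = totdeg p"
proof -
  assume "p \<noteq> 0"
  then have ne: "{i + j | i j. cf p i j \<noteq> 0} \<noteq> {}" using cf_nonzero_ex by blast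
  have "totdeg p \<in> {i + j | i j. cf p i j \<noteq> 0}"
    unfolding totdeg_cf using Max_in[OF totdeg_set_finite ne] .
  then obtain i j where "totdeg p = i + j" "cf p i j \<noteq> 0" by blast
  then show ?thesis by metis
qed

lemma totdeg_le_iff: "p \<noteq> 0 \<Longrightarrow> totdeg p \<le> n \<longleftrightarrow> deg_le p n"
  using totdeg_attained[of p] deg_le_totdeg[of p] unfolding deg_le_def
  by (metis le_trans)

lemma deg_le_mono: "deg_le p m \<Longrightarrow> m \<le> n \<Longrightarrow> deg_le p n"
  unfolding deg_le_def by force

lemma deg_le_mult: assumes "deg_le p m" "deg_le q n" shows "deg_le (p * q) (m + n)"
  unfolding deg_le_def
proof (intro allI impI)
  fix i j assume "cf (p * q) i j \<noteq> 0"
  then obtain j1 i1 where "j1 \<le> j" "i1 \<le> i" "cf p i1 j1 * cf q (i - i1) (j - j1) \<noteq> 0"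
    unfolding cf_mult by (metis (no_types, lifting) atMost_iff sum.neutral)
  then have "i1 + j1 \<le> m" "(i - i1) + (j - j1) \<le> n" using assms unfolding deg_le_def
    using mult_not_zero by blast+
  moreover have "i + j = (i1 + j1) + ((i - i1) + (j - j1))" using \<open>j1 \<le> j\<close> \<open>i1 \<le> i\<close> by simp
  ultimately show "i + j \<le> m + n" by linarith
qed

lemma deg_le_add: "deg_le p n \<Longrightarrow> deg_le q n \<Longrightarrow> deg_le (p + q) n"
  unfolding deg_le_def by (metis add.right_neutral cf_add)

lemma deg_le_smult: "deg_le p n \<Longrightarrow> deg_le (smult [:c:] p) n"
  unfolding deg_le_def by simp

lemma deg_le_0[simp]: "deg_le 0 n"
  by (simp add: deg_le_def)

lemma deg_le_sum: "(\<And>x. x \<in> S \<Longrightarrow> deg_le (f x) n) \<Longrightarrow> deg_le (sum f S) n"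
  by (induction S rule: infinite_finite_induct) (auto intro!: deg_le_add)

lemma deg_le_prod: "finite S \<Longrightarrow> (\<And>x. x \<in> S \<Longrightarrow> deg_le (f x) (g x)) \<Longrightarrow> deg_le (prod f S) (sum g S)"
proof (induction S rule: finite_induct)
  case empty
  then show ?case by (simp add: deg_le_def cf_def coeff_1)
next
  case (insert x F)
  then show ?case by (simp add: deg_le_mult)
qed

lemma deg_le_mono_poly: "deg_le (mono i j) (i + j)"
  by (simp add: deg_le_def cf_mono)


definition bet :: "bpoly \<Rightarrow> nat" where
  "bet p = Max {j. j \<le> totdeg p \<and> cf p (totdeg p - j) j \<noteq> 0}"

definition alp :: "bpoly \<Rightarrow> nat" where
  "alp p = totdeg p - bet p"

lemma bet_props:
  assumes "p \<noteq> 0"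
  shows "bet p \<le> totdeg p" "cf p (alp p) (bet p) \<noteq> 0" "alp p + bet p = totdeg p"
    "\<And>j. j \<le> totdeg p \<Longrightarrow> bet p < j \<Longrightarrow> cf p (totdeg p - j) j = 0"
proof -
  let ?S = "{j. j \<le> totdeg p \<and> cf p (totdeg p - j) j \<noteq> 0}"
  have fin: "finite ?S" by (rule finite_subset[of _ "{..totdeg p}"]) auto
  obtain i j where ij: "cf p i j \<noteq> 0" "i + j = totdeg p" using totdeg_attained[OF assms] by blast
  moreover have "totdeg p - j = i" using ij(2) by simp
  ultimately have "j \<in> ?S" by auto
  then have ne: "?S \<noteq> {}" by blast
  have "bet p \<in> ?S" unfolding bet_def using Max_in[OF fin ne] .
  then show "bet p \<le> totdeg p" "cf p (alp p) (bet p) \<noteq> 0" "alp p + bet p = totdeg p"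
    by (auto simp: alp_def)
  show "\<And>j. j \<le> totdeg p \<Longrightarrow> bet p < j \<Longrightarrow> cf p (totdeg p - j) j = 0"
  proof (rule ccontr)
    fix j assume "j \<le> totdeg p" "bet p < j" "cf p (totdeg p - j) j \<noteq> 0"
    then have "j \<in> ?S" by auto
    then have "j \<le> bet p" unfolding bet_def using fin by (intro Max_ge) auto
    then show False using \<open>bet p < j\<close> by simp
  qed
qed

lemma top_zero:
  assumes "p \<noteq> 0" "cf p i j \<noteq> 0" "i + j = totdeg p"
  shows "j \<le> bet p"
proof (rule ccontr)
  assume "\<not> j \<le> bet p"
  then have "cf p (totdeg p - j) j = 0" using bet_props(4)[OF assms(1), of j] assms(3) by auto
  moreover have "totdeg p - j = i" using assms(3) by simp
  ultimately show False using assms(2) by simp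
qed

lemma lead_mult:
  assumes p: "p \<noteq> 0" and q: "q \<noteq> 0"
  shows "cf (p * q) (alp p + alp q) (bet p + bet q) = cf p (alp p) (bet p) * cf q (alp q) (bet q)"
proof -
  let ?I = "alp p + alp q" and ?J = "bet p + bet q"
  let ?F = "\<lambda>i1 j1. cf p i1 j1 * cf q (?I - i1) (?J - j1)"
  have tp: "alp p + bet p = totdeg p" and tq: "alp q + bet q = totdeg q"
    using bet_props(3) p q by auto
  have F: "?F i1 j1 = (if j1 = bet p then (if i1 = alp p then ?F (alp p) (bet p) else 0) else 0)"
    if "i1 \<le> ?I" "j1 \<le> ?J" for i1 j1
  proof (cases "?F i1 j1 = 0")
    case False
    then have a: "cf p i1 j1 \<noteq> 0" and b: "cf q (?I - i1) (?J - j1) \<noteq> 0" by auto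
    have c1: "i1 + j1 \<le> totdeg p" using cf_le_totdeg[OF a] .
    have c2: "(?I - i1) + (?J - j1) \<le> totdeg q" using cf_le_totdeg[OF b] .
    have e1: "i1 + j1 = totdeg p" using c1 c2 tp tq that by linarith
    have e2: "(?I - i1) + (?J - j1) = totdeg q" using c1 c2 tp tq that by linarith
    have "j1 \<le> bet p" using top_zero[OF p a e1] .
    moreover have "?J - j1 \<le> bet q" using top_zero[OF q b e2] .
    ultimately have "j1 = bet p" using that by linarith
    moreover then have "i1 = alp p" using e1 tp by linarith
    ultimately show ?thesis by simp
  qed auto
  have "cf (p * q) ?I ?J = (\<Sum>j1\<le>?J. \<Sum>i1\<le>?I. ?F i1 j1)" by (rule cf_mult)
  also have "\<dots> = (\<Sum>j1\<le>?J. \<Sum>i1\<le>?I. (if j1 = bet p then (if i1 = alp p then ?F (alp p) (bet p) else 0) else 0))"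
    by (intro sum.cong refl, subst F) auto
  also have "\<dots> = (\<Sum>j1\<le>?J. if j1 = bet p then (\<Sum>i1\<le>?I. if i1 = alp p then ?F (alp p) (bet p) else 0) else 0)"
    by (intro sum.cong) auto
  also have "\<dots> = ?F (alp p) (bet p)"
    by (subst sum.delta, simp, subst sum.delta, simp_all)
  finally show ?thesis by simp
qed

lemma lead_mult_above:
  assumes p: "p \<noteq> 0" and q: "q \<noteq> 0" and ij: "i + j = totdeg p + totdeg q" and j: "bet p + bet q < j"
  shows "cf (p * q) i j = 0"
proof -
  let ?F = "\<lambda>i1 j1. cf p i1 j1 * cf q (i - i1) (j - j1)"
  have "?F i1 j1 = 0" if "i1 \<le> i" "j1 \<le> j" for i1 j1
  proof (rule ccontr)
    assume "?F i1 j1 \<noteq> 0"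
    then have a: "cf p i1 j1 \<noteq> 0" and b: "cf q (i - i1) (j - j1) \<noteq> 0" by auto
    have c1: "i1 + j1 \<le> totdeg p" using cf_le_totdeg[OF a] .
    have c2: "(i - i1) + (j - j1) \<le> totdeg q" using cf_le_totdeg[OF b] .
    have e1: "i1 + j1 = totdeg p" using c1 c2 ij that by linarith
    have e2: "(i - i1) + (j - j1) = totdeg q" using c1 c2 ij that by linarith
    have "j1 \<le> bet p" using top_zero[OF p a e1] .
    moreover have "j - j1 \<le> bet q" using top_zero[OF q b e2] .
    ultimately show False using j that by linarith
  qed
  then show ?thesis unfolding cf_mult by (intro sum.neutral ballI) auto
qed

lemma totdeg_mult:
  assumes p: "p \<noteq> 0" and q: "q \<noteq> 0"
  shows "totdeg (p * q) = totdeg p + totdeg q"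
proof -
  have pq: "p * q \<noteq> 0" using p q by simp
  have "deg_le (p * q) (totdeg p + totdeg q)" by (intro deg_le_mult deg_le_totdeg)
  then have le: "totdeg (p * q) \<le> totdeg p + totdeg q" using totdeg_le_iff[OF pq] by simp
  have "cf (p * q) (alp p + alp q) (bet p + bet q) \<noteq> 0"
    using lead_mult[OF p q] bet_props(2)[OF p] bet_props(2)[OF q] by simp
  then have "(alp p + alp q) + (bet p + bet q) \<le> totdeg (p * q)" by (rule cf_le_totdeg)
  then show ?thesis using le bet_props(3)[OF p] bet_props(3)[OF q] by linarith
qed

lemma bet_mult:
  assumes p: "p \<noteq> 0" and q: "q \<noteq> 0"
  shows "bet (p * q) = bet p + bet q" "alp (p * q) = alp p + alp q"
proof -
  have pq: "p * q \<noteq> 0" using p q by simp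
  have td: "totdeg (p * q) = totdeg p + totdeg q" by (rule totdeg_mult[OF p q])
  have nz: "cf (p * q) (alp p + alp q) (bet p + bet q) \<noteq> 0"
    using lead_mult[OF p q] bet_props(2)[OF p] bet_props(2)[OF q] by simp
  have s: "(alp p + alp q) + (bet p + bet q) = totdeg (p * q)"
    using td bet_props(3)[OF p] bet_props(3)[OF q] by linarith
  have ge: "bet p + bet q \<le> bet (p * q)" using top_zero[OF pq nz s] .
  have le: "bet (p * q) \<le> bet p + bet q"
  proof (rule ccontr)
    assume "\<not> ?thesis"
    then have "cf (p * q) (alp (p*q)) (bet (p*q)) = 0"
      using lead_mult_above[OF p q] bet_props(3)[OF pq] td by auto
    then show False using bet_props(2)[OF pq] by simp
  qed
  show "bet (p * q) = bet p + bet q" using ge le by simp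
  then show "alp (p * q) = alp p + alp q"
    using bet_props(3)[OF pq] bet_props(3)[OF p] bet_props(3)[OF q] td by linarith
qed

lemma totdeg_dvd:
  assumes "p dvd q" "q \<noteq> 0"
  shows "totdeg p \<le> totdeg q"
proof -
  obtain r where r: "q = p * r" using assms(1) by blast
  then have "p \<noteq> 0" "r \<noteq> 0" using assms(2) by auto
  then show ?thesis using r totdeg_mult by simp
qed


definition sc :: "real \<Rightarrow> bpoly \<Rightarrow> bpoly" where
  "sc c p = smult [:c:] p"

lemma pCons_add_const: "[:a + b:] = [:a:] + [:b::real:]"
  by simp

interpretation BV: vector_space sc
proof unfold_locales
  fix a b :: real and x y :: bpoly
  show "sc a (x + y) = sc a x + sc a y" by (simp add: sc_def smult_add_right)
  show "sc (a + b) x = sc a x + sc b x" by (simp add: sc_def pCons_add_const smult_add_left del: add_pCons)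
  show "sc a (sc b x) = sc (a * b) x" by (simp add: sc_def mult.commute)
  show "sc 1 x = x" by (simp add: sc_def one_pCons[symmetric])
qed

lemma sc_1[simp]: "sc 1 p = p"
  by (simp add: sc_def one_pCons[symmetric])
lemma sc_m1[simp]: "sc (-1) p = - p"
  using BV.scale_minus_left[of 1 p] by simp
lemma sc_0[simp]: "sc 0 p = 0"
  by (simp add: sc_def)

lemma cf_sc[simp]: "cf (sc c p) i j = c * cf p i j"
  by (simp add: sc_def)
lemma bpeval_sc[simp]: "bpeval (sc c p) a b = c * bpeval p a b"
  by (simp add: sc_def)

definition Mon :: "nat \<Rightarrow> (nat \<times> nat) set" where
  "Mon N = {(i, j). i + j \<le> N}"

lemma Mon_finite[simp]: "finite (Mon N)"
  by (rule finite_subset[of _ "{..N} \<times> {..N}"]) (auto simp: Mon_def)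

lemma Mon_Suc: "Mon (Suc N) = Mon N \<union> (\<lambda>i. (i, Suc N - i)) ` {..Suc N}"
  by (auto simp: Mon_def image_iff)

lemma card_Mon: "2 * card (Mon N) = (N + 1) * (N + 2)"
proof (induction N)
  case 0
  have "Mon 0 = {(0, 0)}" by (auto simp: Mon_def)
  then show ?case by simp
next
  case (Suc N)
  have disj: "Mon N \<inter> (\<lambda>i. (i, Suc N - i)) ` {..Suc N} = {}" by (auto simp: Mon_def)
  have inj: "inj_on (\<lambda>i. (i, Suc N - i)) {..Suc N}" by (auto simp: inj_on_def)
  have "card (Mon (Suc N)) = card (Mon N) + card ((\<lambda>i. (i, Suc N - i)) ` {..Suc N})"
    unfolding Mon_Suc by (rule card_Un_disjoint) (use disj in auto)
  also have "card ((\<lambda>i. (i, Suc N - i)) ` {..Suc N}) = N + 2"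
    using card_image[OF inj] by simp
  finally show ?case using Suc by (simp add: algebra_simps)
qed

lemma cf_mono_sum: "cf (case x of (i, j) \<Rightarrow> sc (cf f i j) (mono i j)) i' j' = (if x = (i', j') then cf f i' j' else 0)"
  by (cases x) (simp add: cf_mono)

lemma poly_expand:
  assumes "deg_le f N"
  shows "f = (\<Sum>(i, j)\<in>Mon N. sc (cf f i j) (mono i j))"
proof -
  have "cf f i' j' = cf (\<Sum>(i, j)\<in>Mon N. sc (cf f i j) (mono i j)) i' j'" for i' j'
  proof -
    have "cf (\<Sum>(i, j)\<in>Mon N. sc (cf f i j) (mono i j)) i' j' =
          (\<Sum>x\<in>Mon N. (if x = (i', j') then cf f i' j' else 0))"
      unfolding cf_sum by (intro sum.cong refl) (simp only: cf_mono_sum)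
    also have "\<dots> = (if (i', j') \<in> Mon N then cf f i' j' else 0)"
      by (rule sum.delta) simp
    also have "\<dots> = cf f i' j'" using assms by (auto simp: Mon_def deg_le_def)
    finally show ?thesis by simp
  qed
  then show ?thesis by (subst poly_eq_cf) blast
qed

lemma span_deg_le:
  assumes "deg_le f N"
  shows "f \<in> BV.span ((\<lambda>(i, j). mono i j) ` Mon N)"
proof -
  have "(\<Sum>(i, j)\<in>Mon N. sc (cf f i j) (mono i j)) \<in> BV.span ((\<lambda>(i, j). mono i j) ` Mon N)"
  proof (intro BV.span_sum)
    fix x assume "x \<in> Mon N"
    then obtain a b where ab: "x = (a, b)" "(a, b) \<in> Mon N" by (cases x) auto
    have "mono a b \<in> (\<lambda>(i, j). mono i j) ` Mon N" by (rule image_eqI[where x="(a,b)"]) (use ab in auto)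
    then show "(case x of (i, j) \<Rightarrow> sc (cf f i j) (mono i j)) \<in> BV.span ((\<lambda>(i, j). mono i j) ` Mon N)"
      using ab by (simp add: BV.span_scale BV.span_base)
  qed
  then show ?thesis by (simp only: poly_expand[OF assms, symmetric])
qed

lemma card_monos: "card ((\<lambda>(i, j). mono i j) ` Mon N) \<le> card (Mon N)"
  by (rule card_image_le) simp

lemma indep_family_bound:
  fixes g :: "'i \<Rightarrow> bpoly"
  assumes I: "finite I"
    and indep: "\<And>c. (\<Sum>i\<in>I. sc (c i) (g i)) = 0 \<Longrightarrow> \<forall>i\<in>I. c i = 0"
    and deg: "\<And>i. i \<in> I \<Longrightarrow> deg_le (g i) N"
  shows "card I \<le> card (Mon N)"
proof -
  have inj: "inj_on g I"
  proof (rule inj_onI, rule ccontr)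
    fix x y assume xy: "x \<in> I" "y \<in> I" "g x = g y" "x \<noteq> y"
    let ?c = "\<lambda>i. if i = x then 1 else if i = y then -1 else (0::real)"
    have "(\<Sum>i\<in>I. sc (?c i) (g i)) = (\<Sum>i\<in>{x, y}. sc (?c i) (g i))"
      using I xy by (intro sum.mono_neutral_right) auto
    also have "\<dots> = 0" using xy by simp
    finally have "\<forall>i\<in>I. ?c i = 0" by (rule indep)
    then show False using xy by auto
  qed
  have ind: "BV.independent (g ` I)"
    unfolding BV.independent_explicit_module
  proof (intro allI impI)
    fix t u v assume t: "finite t" "t \<subseteq> g ` I" "(\<Sum>v\<in>t. sc (u v) v) = 0" "v \<in> t"
    let ?c = "\<lambda>i. if g i \<in> t then u (g i) else 0"
    have "(\<Sum>i\<in>I. sc (?c i) (g i)) = (\<Sum>i\<in>{i\<in>I. g i \<in> t}. sc (u (g i)) (g i))"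
      using I by (intro sum.mono_neutral_cong_right) auto
    also have "\<dots> = (\<Sum>v\<in>g ` {i\<in>I. g i \<in> t}. sc (u v) v)"
      by (rule sum.reindex[symmetric, unfolded comp_def]) (rule inj_on_subset[OF inj], auto)
    also have "g ` {i\<in>I. g i \<in> t} = t" using t(2) by auto
    finally have "\<forall>i\<in>I. ?c i = 0" using t(3) by (intro indep) simp
    moreover obtain i where "i \<in> I" "v = g i" using t(2,4) by blast
    ultimately show "u v = 0" using t(4) by auto
  qed
  have sub: "g ` I \<subseteq> BV.span ((\<lambda>(i, j). mono i j) ` Mon N)"
    using deg span_deg_le by auto
  have "card (g ` I) \<le> card ((\<lambda>(i, j). mono i j) ` Mon N)"
    using BV.independent_span_bound[OF _ ind sub] by simp
  then show ?thesis using card_image[OF inj] card_monos[of N] by linarith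
qed


lemma cf_const: "cf [:[:c:]:] i j = (if i = 0 \<and> j = 0 then c else 0)"
  by (simp add: cf_def coeff_pCons split: nat.splits)

lemma deg_le_const: "deg_le [:[:c:]:] n"
  by (simp add: deg_le_def cf_const)

definition lin :: "real \<times> real \<Rightarrow> real \<times> real \<Rightarrow> bpoly" where
  "lin z w = (if fst w \<noteq> fst z then mono 1 0 + [:[:- fst w:]:] else mono 0 1 + [:[:- snd w:]:])"

lemma bpeval_lin: "bpeval (lin z w) a b = (if fst w \<noteq> fst z then a - fst w else b - snd w)"
  by (simp add: lin_def)

lemma deg_le_lin: "deg_le (lin z w) 1"
  unfolding lin_def
  using deg_le_mono_poly[of 1 0] deg_le_mono_poly[of 0 1]
  by (auto intro!: deg_le_add deg_le_const)

definition hz :: "(real \<times> real) set \<Rightarrow> real \<times> real \<Rightarrow> bpoly" where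
  "hz K z = (\<Prod>w\<in>K - {z}. lin z w)"

lemma hz_deg: "finite K \<Longrightarrow> deg_le (hz K z) (card K)"
proof -
  assume K: "finite K"
  have "deg_le (hz K z) (\<Sum>w\<in>K - {z}. 1)"
    unfolding hz_def using K deg_le_lin by (intro deg_le_prod) auto
  moreover have "(\<Sum>w\<in>K - {z}. 1) \<le> card K" using K by (simp add: card_Diff_subset_Int)
  ultimately show ?thesis by (rule deg_le_mono)
qed

lemma hz_other: "finite K \<Longrightarrow> z' \<in> K \<Longrightarrow> z' \<noteq> z \<Longrightarrow> bpeval (hz K z) (fst z') (snd z') = 0"
  unfolding hz_def bpeval_prod
  by (rule prod_zero) (auto simp: bpeval_lin intro!: bexI[of _ z'])

lemma hz_self: "finite K \<Longrightarrow> bpeval (hz K z) (fst z) (snd z) \<noteq> 0"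
  unfolding hz_def bpeval_prod
  by (auto simp: bpeval_lin prod_zero_iff prod_eq_iff)

lemma cf_lincomb:
  assumes "finite S"
  shows "cf (\<Sum>x\<in>S. sc (d x) (case x of (a, b) \<Rightarrow> mono a b)) i j = (if (i, j) \<in> S then d (i, j) else 0)"
proof -
  have "cf (\<Sum>x\<in>S. sc (d x) (case x of (a, b) \<Rightarrow> mono a b)) i j = (\<Sum>x\<in>S. if x = (i, j) then d (i, j) else 0)"
    unfolding cf_sum
  proof (intro sum.cong refl)
    fix x show "cf (sc (d x) (case x of (a, b) \<Rightarrow> mono a b)) i j = (if x = (i, j) then d (i, j) else 0)"
      by (cases x) (simp add: cf_mono)
  qed
  also have "\<dots> = (if (i, j) \<in> S then d (i, j) else 0)"
    using assms by (rule sum.delta)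
  finally show ?thesis .
qed

lemma sc_mult: "sc c (u * p) = sc c u * p"
  by (simp add: sc_def)


lemma bezout_card:
  assumes p: "irreducible p" and nd: "\<not> p dvd Q" and K: "finite K"
    and Kz: "\<And>z. z \<in> K \<Longrightarrow> bpeval p (fst z) (snd z) = 0 \<and> bpeval Q (fst z) (snd z) = 0"
  shows "card K \<le> totdeg p * totdeg Q"
proof -
  have p0: "p \<noteq> 0" using p by auto
  have Q0: "Q \<noteq> 0" using nd by auto
  have pr: "prime_elem p" using p by (rule irreducible_imp_prime_elem)
  define m where "m = totdeg p"
  define n where "n = totdeg Q"
  define k where "k = card K"
  define N where "N = m + n + k"
  define MQ where "MQ = {x \<in> Mon (N - n). \<not> (alp p \<le> fst x \<and> bet p \<le> snd x)}"
  define I where "I = Mon (N - m) <+> (MQ <+> K)"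
  define g where "g = case_sum (\<lambda>(a, b). mono a b * p) (case_sum (\<lambda>(a, b). mono a b * Q) (hz K))"
  have MQfin: "finite MQ" unfolding MQ_def by simp
  have Ifin: "finite I" unfolding I_def using MQfin K by simp
  have indep: "\<forall>i\<in>I. c i = 0" if S: "(\<Sum>i\<in>I. sc (c i) (g i)) = 0" for c
  proof -
    define A where "A = (\<Sum>x\<in>Mon (N - m). sc (c (Inl x)) (case x of (a, b) \<Rightarrow> mono a b))"
    define B where "B = (\<Sum>x\<in>MQ. sc (c (Inr (Inl x))) (case x of (a, b) \<Rightarrow> mono a b))"
    define H where "H = (\<Sum>z\<in>K. sc (c (Inr (Inr z))) (hz K z))"
    have eqA: "(\<Sum>x\<in>Mon (N - m). sc (c (Inl x)) (g (Inl x))) = A * p"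
      unfolding A_def g_def sum_distrib_right
      by (intro sum.cong refl) (auto simp: sc_mult)
    have eqB: "(\<Sum>x\<in>MQ. sc (c (Inr (Inl x))) (g (Inr (Inl x)))) = B * Q"
      unfolding B_def g_def sum_distrib_right
      by (intro sum.cong refl) (auto simp: sc_mult)
    have eqH: "(\<Sum>z\<in>K. sc (c (Inr (Inr z))) (g (Inr (Inr z)))) = H"
      unfolding H_def g_def by simp
    have "(\<Sum>i\<in>I. sc (c i) (g i)) = A * p + (B * Q + H)"
      unfolding I_def using MQfin K
      by (simp add: sum.Plus comp_def eqA eqB eqH)
    then have S': "A * p + B * Q + H = 0" using S by (simp add: add.assoc)
    have cK: "c (Inr (Inr z)) = 0" if z: "z \<in> K" for z
    proof -
      have "bpeval (A * p + B * Q + H) (fst z) (snd z) = 0" using S' by simp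
      then have "bpeval H (fst z) (snd z) = 0" using Kz[OF z] by simp
      moreover have "bpeval H (fst z) (snd z) = c (Inr (Inr z)) * bpeval (hz K z) (fst z) (snd z)"
      proof -
        have "bpeval H (fst z) (snd z) = (\<Sum>w\<in>K. c (Inr (Inr w)) * bpeval (hz K w) (fst z) (snd z))"
          unfolding H_def bpeval_sum by simp
        also have "\<dots> = c (Inr (Inr z)) * bpeval (hz K z) (fst z) (snd z)"
        proof -
          have "\<forall>w\<in>K - {z}. c (Inr (Inr w)) * bpeval (hz K w) (fst z) (snd z) = 0"
            using hz_other[OF K z] by auto
          then show ?thesis using K z by (subst sum.remove[of K z]) (auto simp: sum.neutral)
        qed
        finally show ?thesis .
      qed
      ultimately show ?thesis using hz_self[OF K, of z] by simp
    qed
    have H0: "H = 0" unfolding H_def using cK by simp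
    have "B * Q = p * (- A)" using S' H0 by (simp add: algebra_simps add_eq_0_iff2)
    then have "p dvd B * Q" by (metis dvdI)
    then have "p dvd B" using pr nd prime_elem_dvd_mult_iff by blast
    then obtain C where C: "B = p * C" by blast
    have B0: "B = 0"
    proof (rule ccontr)
      assume Bn: "B \<noteq> 0"
      then have C0: "C \<noteq> 0" using C by auto
      have "cf B (alp B) (bet B) \<noteq> 0" using bet_props(2)[OF Bn] .
      moreover have "alp B = alp p + alp C" "bet B = bet p + bet C"
        using bet_mult[OF p0 C0] C by auto
      moreover have "cf B i j = (if (i, j) \<in> MQ then c (Inr (Inl (i, j))) else 0)" for i j
        unfolding B_def using MQfin by (rule cf_lincomb)
      ultimately show False unfolding MQ_def by (auto split: if_splits)
    qed
    have cQ: "c (Inr (Inl x)) = 0" if "x \<in> MQ" for x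
    proof -
      have "cf B (fst x) (snd x) = c (Inr (Inl x))"
        unfolding B_def using MQfin that by (subst cf_lincomb) auto
      then show ?thesis using B0 by simp
    qed
    have "A * p = 0" using S' H0 B0 by simp
    then have A0: "A = 0" using p0 by simp
    have cA: "c (Inl x) = 0" if "x \<in> Mon (N - m)" for x
    proof -
      have "cf A (fst x) (snd x) = c (Inl x)"
        unfolding A_def using that by (subst cf_lincomb) auto
      then show ?thesis using A0 by simp
    qed
    show ?thesis unfolding I_def using cA cQ cK by auto
  qed
  have deg: "deg_le (g i) N" if "i \<in> I" for i
  proof -
    have mp: "deg_le (mono a b * p) N" if "(a, b) \<in> Mon (N - m)" for a b
      using deg_le_mult[OF deg_le_mono_poly deg_le_totdeg, of a b p] that
      by (elim deg_le_mono) (auto simp: Mon_def m_def N_def)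
    have mQ: "deg_le (mono a b * Q) N" if "(a, b) \<in> MQ" for a b
      using deg_le_mult[OF deg_le_mono_poly deg_le_totdeg, of a b Q] that
      by (elim deg_le_mono) (auto simp: Mon_def MQ_def n_def N_def)
    have h: "deg_le (hz K z) N" for z
      using hz_deg[OF K, of z] by (rule deg_le_mono) (simp add: k_def N_def)
    show ?thesis using that mp mQ h unfolding I_def g_def by auto
  qed
  have cardI: "card I \<le> card (Mon N)"
    by (rule indep_family_bound[OF Ifin _ deg]) (rule indep)
  have cI: "card I = card (Mon (N - m)) + card MQ + k"
    unfolding I_def k_def using MQfin K by (simp add: card_Plus)
  define Dv where "Dv = (\<lambda>(a, b). (a + alp p, b + bet p)) ` Mon (N - n - m)"
  have ab: "alp p + bet p = m" unfolding m_def using bet_props(3)[OF p0] .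
  have split: "Mon (N - n) = MQ \<union> Dv"
  proof
    show "Mon (N - n) \<subseteq> MQ \<union> Dv"
    proof
      fix x assume x: "x \<in> Mon (N - n)"
      show "x \<in> MQ \<union> Dv"
      proof (cases "alp p \<le> fst x \<and> bet p \<le> snd x")
        case True
        then have "(fst x - alp p, snd x - bet p) \<in> Mon (N - n - m)"
          using x ab by (auto simp: Mon_def)
        moreover have "x = (\<lambda>(a, b). (a + alp p, b + bet p)) (fst x - alp p, snd x - bet p)"
          using True by auto
        ultimately show ?thesis unfolding Dv_def by blast
      next
        case False
        then show ?thesis using x unfolding MQ_def by auto
      qed
    qed
    show "MQ \<union> Dv \<subseteq> Mon (N - n)"
      unfolding MQ_def Dv_def using ab by (auto simp: Mon_def N_def)
  qed
  have disj: "MQ \<inter> Dv = {}" unfolding MQ_def Dv_def by auto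
  have injD: "inj_on (\<lambda>(a, b). (a + alp p, b + bet p)) (Mon (N - n - m))"
    by (auto simp: inj_on_def)
  have cD: "card Dv = card (Mon (N - n - m))" unfolding Dv_def using injD by (rule card_image)
  have cMQ: "card MQ + card (Mon (N - n - m)) = card (Mon (N - n))"
    using split disj MQfin cD card_Un_disjoint[of MQ Dv]
    by (metis Dv_def Mon_finite finite_imageI)
  have e1: "N - m = n + k" "N - n = m + k" "N - n - m = k" unfolding N_def by auto
  have T1: "2 * card (Mon (n + k)) = (n + k + 1) * (n + k + 2)" by (rule card_Mon)
  have T2: "2 * card (Mon (m + k)) = (m + k + 1) * (m + k + 2)" by (rule card_Mon)
  have T3: "2 * card (Mon k) = (k + 1) * (k + 2)" by (rule card_Mon)
  have T4: "2 * card (Mon N) = (m + n + k + 1) * (m + n + k + 2)" unfolding N_def by (rule card_Mon)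
  have E: "(m + n + k + 1) * (m + n + k + 2) + (k + 1) * (k + 2) =
           (n + k + 1) * (n + k + 2) + (m + k + 1) * (m + k + 2) + 2 * (m * n)"
    by (simp add: algebra_simps)
  have "k \<le> m * n"
  proof -
    have a: "card MQ + card (Mon k) = card (Mon (m + k))" using cMQ e1 by simp
    have b: "card I = card (Mon (n + k)) + card MQ + k" using cI e1 by simp
    show ?thesis using cardI a b T1 T2 T3 T4 E by linarith
  qed
  then show ?thesis unfolding k_def m_def n_def .
qed

lemma bezout:
  assumes p: "irreducible p" and nd: "\<not> p dvd Q"
  shows "finite (zero_set p \<inter> zero_set Q) \<and> card (zero_set p \<inter> zero_set Q) \<le> totdeg p * totdeg Q"
proof -
  have *: "card K \<le> totdeg p * totdeg Q" if "finite K" "K \<subseteq> zero_set p \<inter> zero_set Q" for K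
    using that by (intro bezout_card[OF p nd]) (auto simp: zero_set_def)
  have fin: "finite (zero_set p \<inter> zero_set Q)"
  proof (rule ccontr)
    assume "infinite (zero_set p \<inter> zero_set Q)"
    then obtain K where "finite K" "card K = Suc (totdeg p * totdeg Q)" "K \<subseteq> zero_set p \<inter> zero_set Q"
      using infinite_arbitrarily_large by blast
    then show False using * by fastforce
  qed
  then show ?thesis using * by blast
qed


lemma core_pos:
  fixes F :: "real \<Rightarrow> real \<Rightarrow> real"
  assumes ct: "\<And>s. continuous_on UNIV (\<lambda>t. F t s)"
    and cs: "\<And>t. isCont (\<lambda>s. F t s) b"
    and z: "F a b = 0"
    and D: "DERIV (\<lambda>t. F t b) a :> D" "0 < D"
  shows "infinite {(t, s). F t s = 0}"
proof
  assume fin: "finite {(t, s). F t s = 0}"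
  obtain d1 where d1: "d1 > 0" "\<forall>h>0. h < d1 \<longrightarrow> F a b < F (a + h) b"
    using DERIV_pos_inc_right[OF D] by blast
  obtain d2 where d2: "d2 > 0" "\<forall>h>0. h < d2 \<longrightarrow> F (a - h) b < F a b"
    using DERIV_pos_inc_left[OF D] by blast
  define h where "h = min d1 d2 / 2"
  have h: "h > 0" "h < d1" "h < d2" using d1 d2 by (auto simp: h_def)
  have p1: "F (a + h) b > 0" using d1 h z by auto
  have p2: "F (a - h) b < 0" using d2 h z by auto
  have ev1: "eventually (\<lambda>s. F (a + h) s > 0) (at b)"
    using order_tendstoD(1)[OF cs[of "a + h", unfolded isCont_def] p1] .
  have ev2: "eventually (\<lambda>s. F (a - h) s < 0) (at b)"
    using order_tendstoD(2)[OF cs[of "a - h", unfolded isCont_def] p2] .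
  have "eventually (\<lambda>s. F (a + h) s > 0 \<and> F (a - h) s < 0) (at b)"
    using ev1 ev2 by eventually_elim auto
  then obtain e where e: "e > 0" "\<forall>s. s \<noteq> b \<and> dist s b < e \<longrightarrow> F (a + h) s > 0 \<and> F (a - h) s < 0"
    unfolding eventually_at by auto
  have sub: "{b<..<b + e} \<subseteq> snd ` {(t, s). F t s = 0}"
  proof
    fix s assume s: "s \<in> {b<..<b + e}"
    then have "s \<noteq> b \<and> dist s b < e" by (auto simp: dist_real_def)
    then have ss: "F (a + h) s > 0" "F (a - h) s < 0" using e by auto
    have "continuous_on {a - h .. a + h} (\<lambda>t. F t s)"
      using ct[of s] by (rule continuous_on_subset) auto
    then obtain t where "a - h \<le> t" "t \<le> a + h" "F t s = 0"
      using IVT'[of "\<lambda>t. F t s" "a - h" 0 "a + h"] ss h by auto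
    then show "s \<in> snd ` {(t, s). F t s = 0}" by (auto intro!: image_eqI[of _ _ "(t, s)"])
  qed
  have "finite (snd ` {(t, s). F t s = 0})" using fin by simp
  then have "finite {b<..<b + e}" using sub by (rule finite_subset[rotated])
  moreover have "b < b + e" using e by simp
  ultimately show False using infinite_Ioo by blast
qed

lemma core:
  fixes F :: "real \<Rightarrow> real \<Rightarrow> real"
  assumes ct: "\<And>s. continuous_on UNIV (\<lambda>t. F t s)"
    and cs: "\<And>t. isCont (\<lambda>s. F t s) b"
    and z: "F a b = 0"
    and D: "DERIV (\<lambda>t. F t b) a :> D" "D \<noteq> 0"
  shows "infinite {(t, s). F t s = 0}"
proof (cases "D > 0")
  case True
  then show ?thesis using core_pos[OF ct cs z D(1)] by simp
next
  case False
  then have Dn: "0 < - D" using D(2) by simp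
  have "infinite {(t, s). - F t s = 0}"
  proof (rule core_pos[where a = a and b = b, OF _ _ _ _ Dn])
    show "continuous_on UNIV (\<lambda>t. - F t s)" for s using ct[of s] by (intro continuous_intros)
    show "isCont (\<lambda>s. - F t s) b" for t using cs[of t] by (intro continuous_intros)
    show "- F a b = 0" using z by simp
    show "((\<lambda>t. - F t b) has_real_derivative - D) (at a)" using D(1) by (intro derivative_intros)
  qed
  then show ?thesis by simp
qed


definition dx :: "bpoly \<Rightarrow> bpoly" where
  "dx r = map_poly pderiv r"

lemma cf_dx: "cf (dx r) i j = of_nat (Suc i) * cf r (Suc i) j"
  by (simp add: dx_def cf_def coeff_map_poly coeff_pderiv)

lemma pderiv_poly_const: "pderiv (poly r [:b:]) = poly (dx r) [:b:]"
  unfolding dx_def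
  by (induction r) (auto simp: map_poly_pCons pderiv_add pderiv_mult pderiv_pCons pderiv_smult)

lemma DERIV_bpeval: "DERIV (\<lambda>t. bpeval r t b) a :> bpeval (dx r) a b"
proof -
  have "DERIV (\<lambda>t. poly (poly r [:b:]) t) a :> poly (pderiv (poly r [:b:])) a"
    by (rule poly_DERIV)
  then show ?thesis by (simp add: bpeval_alt pderiv_poly_const)
qed

lemma cont_t: "continuous_on UNIV (\<lambda>t. bpeval r t s)"
  unfolding bpeval_alt by (intro continuous_intros)

lemma cont_s: "isCont (\<lambda>s. bpeval r t s) b"
  unfolding bpeval_def by simp

lemma zero_deriv:
  assumes fin: "finite (zero_set r)" and z: "bpeval r a b = 0"
  shows "bpeval (dx r) a b = 0"
proof (rule ccontr)
  assume nz: "bpeval (dx r) a b \<noteq> 0"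
  have "infinite {(t, s). bpeval r t s = 0}"
  proof (rule core[where F = "\<lambda>t s. bpeval r t s" and a = a and b = b])
    show "continuous_on UNIV (\<lambda>t. bpeval r t s)" for s by (rule cont_t)
    show "isCont (\<lambda>s. bpeval r t s) b" for t by (rule cont_s)
    show "bpeval r a b = 0" by (rule z)
    show "DERIV (\<lambda>t. bpeval r t b) a :> bpeval (dx r) a b" by (rule DERIV_bpeval)
    show "bpeval (dx r) a b \<noteq> 0" by (rule nz)
  qed
  then show False using fin by (simp add: zero_set_def)
qed

lemma dx_zero_empty:
  assumes fin: "finite (zero_set r)" and d: "dx r = 0"
  shows "zero_set r = {}"
proof (rule ccontr)
  assume "zero_set r \<noteq> {}"
  then obtain a b where ab: "bpeval r a b = 0" by (auto simp: zero_set_def)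
  have const: "poly (coeff r j) t = poly (coeff r j) a" for j t
  proof -
    have "coeff (dx r) j = pderiv (coeff r j)" by (simp add: dx_def coeff_map_poly)
    then have "pderiv (coeff r j) = 0" using d by simp
    then have "degree (coeff r j) = 0" by (simp add: pderiv_eq_0_iff)
    then obtain c where "coeff r j = [:c:]" by (rule degree_eq_zeroE)
    then show ?thesis by simp
  qed
  have "bpeval r t b = bpeval r a b" for t
  proof -
    have "map_poly (\<lambda>c. poly c t) r = map_poly (\<lambda>c. poly c a) r"
    proof (rule poly_eqI)
      fix n
      have "coeff (map_poly (\<lambda>c. poly c t) r) n = poly (coeff r n) t" by (simp add: coeff_map_poly)
      also have "\<dots> = poly (coeff r n) a" by (rule const)
      also have "\<dots> = coeff (map_poly (\<lambda>c. poly c a) r) n" by (simp add: coeff_map_poly)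
      finally show "coeff (map_poly (\<lambda>c. poly c t) r) n = coeff (map_poly (\<lambda>c. poly c a) r) n" .
    qed
    then show ?thesis by (simp add: bpeval_def)
  qed
  then have "range (\<lambda>t. (t, b)) \<subseteq> zero_set r" using ab by (auto simp: zero_set_def)
  moreover have "infinite (range (\<lambda>t::real. (t, b)))"
  proof
    assume "finite (range (\<lambda>t::real. (t, b)))"
    then have "finite (UNIV :: real set)" by (rule finite_imageD) (auto simp: inj_on_def)
    then show False using infinite_UNIV_char_0 by blast
  qed
  ultimately show False using fin finite_subset by blast
qed

lemma deg_le_dx: "deg_le (dx r) (totdeg r - 1)"
  unfolding deg_le_def
proof (intro allI impI)
  fix i j assume "cf (dx r) i j \<noteq> 0"
  then have "cf r (Suc i) j \<noteq> 0" by (simp add: cf_dx)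
  then have "Suc i + j \<le> totdeg r" by (rule cf_le_totdeg)
  then show "i + j \<le> totdeg r - 1" by simp
qed

lemma totdeg0_const:
  assumes "p \<noteq> 0" "totdeg p = 0"
  shows "p = [:[:cf p 0 0:]:]"
proof -
  have "cf p i j = cf [:[:cf p 0 0:]:] i j" for i j
  proof (cases "cf p i j = 0")
    case False
    then have "i + j \<le> 0" using cf_le_totdeg assms(2) by metis
    then show ?thesis by (simp add: cf_const)
  next
    case True
    then show ?thesis by (auto simp: cf_const)
  qed
  then show ?thesis by (subst poly_eq_cf) blast
qed

lemma nonunit_totdeg:
  assumes "p \<noteq> 0" "\<not> is_unit p"
  shows "totdeg p \<ge> 1"
proof (rule ccontr)
  assume "\<not> ?thesis"
  then have t: "totdeg p = 0" by simp
  define c where "c = cf p 0 0"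
  have pc: "p = [:[:c:]:]" using totdeg0_const[OF assms(1) t] by (simp add: c_def)
  then have c0: "c \<noteq> 0" using assms(1) by auto
  have "p * [:[:1 / c:]:] = 1" using c0 pc by (simp add: one_pCons[symmetric])
  then have "is_unit p" by (metis dvdI)
  then show False using assms(2) by simp
qed

lemma unit_zero_set:
  assumes "is_unit p"
  shows "zero_set p = {}"
proof -
  obtain q where "1 = p * q" using assms by blast
  then have "bpeval p a b * bpeval q a b = 1" for a b by (metis bpeval_1 bpeval_mult)
  then have "bpeval p a b \<noteq> 0" for a b by (metis mult_zero_left zero_neq_one)
  then show ?thesis by (auto simp: zero_set_def)
qed

lemma zero_set_mult: "zero_set (a * b) = zero_set a \<union> zero_set b"
  by (auto simp: zero_set_def)

lemma finite_zero_bound: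
  assumes "q \<noteq> 0" "finite (zero_set q)"
  shows "card (zero_set q) \<le> totdeg q ^ 2"
  using assms
proof (induction "totdeg q" arbitrary: q rule: less_induct)
  case less
  show ?case
  proof (cases "is_unit q")
    case True
    then show ?thesis using unit_zero_set by simp
  next
    case nu: False
    show ?thesis
    proof (cases "irreducible q")
      case irr: True
      show ?thesis
      proof (cases "dx q = 0")
        case True
        then show ?thesis using dx_zero_empty[OF less.prems(2) True] by simp
      next
        case dn: False
        have t1: "totdeg (dx q) \<le> totdeg q - 1"
          using deg_le_dx[of q] totdeg_le_iff[OF dn] by simp
        have q1: "totdeg q \<ge> 1" using nonunit_totdeg less.prems nu by blast
        have nd: "\<not> q dvd dx q"
        proof
          assume "q dvd dx q"
          then have "totdeg q \<le> totdeg (dx q)" using totdeg_dvd dn by blast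
          then show False using t1 q1 by linarith
        qed
        have sub: "zero_set q \<subseteq> zero_set q \<inter> zero_set (dx q)"
        proof
          fix z assume z: "z \<in> zero_set q"
          obtain a b where zab: "z = (a, b)" by (cases z)
          have "bpeval q a b = 0" using z zab by (simp add: zero_set_def)
          then have "bpeval (dx q) a b = 0" by (rule zero_deriv[OF less.prems(2)])
          then show "z \<in> zero_set q \<inter> zero_set (dx q)" using z zab by (simp add: zero_set_def)
        qed
        have B: "finite (zero_set q \<inter> zero_set (dx q))"
          "card (zero_set q \<inter> zero_set (dx q)) \<le> totdeg q * totdeg (dx q)"
          using bezout[OF irr nd] by blast+
        have "card (zero_set q) \<le> card (zero_set q \<inter> zero_set (dx q))"
          using card_mono[OF B(1) sub] .
        also have "\<dots> \<le> totdeg q * totdeg (dx q)" using B(2) .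
        also have "\<dots> \<le> totdeg q * totdeg q" using t1 by (intro mult_le_mono2) linarith
        finally show ?thesis by (simp add: power2_eq_square)
      qed
    next
      case False
      then obtain a b where ab: "q = a * b" "\<not> is_unit a" "\<not> is_unit b"
        using less.prems(1) nu unfolding irreducible_def by blast
      have a0: "a \<noteq> 0" and b0: "b \<noteq> 0" using ab less.prems(1) by auto
      have ta: "totdeg a \<ge> 1" and tb: "totdeg b \<ge> 1" using nonunit_totdeg a0 b0 ab by auto
      have tq: "totdeg q = totdeg a + totdeg b" using ab totdeg_mult[OF a0 b0] by simp
      have za: "finite (zero_set a)" and zb: "finite (zero_set b)"
        using less.prems(2) ab(1) zero_set_mult by (metis finite_Un)+
      have "card (zero_set q) \<le> card (zero_set a) + card (zero_set b)"
        unfolding ab(1) zero_set_mult by (rule card_Un_le)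
      also have "\<dots> \<le> totdeg a ^ 2 + totdeg b ^ 2"
      proof (rule add_mono)
        have "totdeg a < totdeg q" using tq tb by linarith
        then show "card (zero_set a) \<le> totdeg a ^ 2" using less.hyps[OF _ a0 za] by blast
        have "totdeg b < totdeg q" using tq ta by linarith
        then show "card (zero_set b) \<le> totdeg b ^ 2" using less.hyps[OF _ b0 zb] by blast
      qed
      also have "\<dots> \<le> (totdeg a + totdeg b) ^ 2" by (simp add: power2_sum)
      finally show ?thesis using tq by simp
    qed
  qed
qed


definition vs :: "real \<Rightarrow> vect \<Rightarrow> vect" where
  "vs c v = (\<lambda>i. c * v i)"

interpretation VS: vector_space vs
  by unfold_locales (auto simp: vs_def fun_eq_iff algebra_simps)

interpretation VP: vector_space_pair vs "(*) :: real \<Rightarrow> real \<Rightarrow> real"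
  by unfold_locales

lemma sum_fun_apply: "(\<Sum>x\<in>T. f x) i = (\<Sum>x\<in>T. (f x :: vect) i)"
  by (induction T rule: infinite_finite_induct) auto

definition hat :: "vect \<Rightarrow> vect" where
  "hat v = v((0, 0) := 1)"

lemma psi_00: "psi k a (0, 0) = 0"
  by (simp add: psi_def)

lemma hat_Fl:
  assumes "x \<in> Fl P"
  shows "hat x \<in> VS.span (hat ` P)"
proof -
  obtain T u where T: "finite T" "T \<subseteq> P" "sum u T = 1" "x = (\<lambda>i. \<Sum>v\<in>T. u v * v i)"
    using assms unfolding Fl_def by blast
  have "hat x = (\<Sum>v\<in>T. vs (u v) (hat v))"
  proof
    fix i
    show "hat x i = (\<Sum>v\<in>T. vs (u v) (hat v)) i"
      unfolding sum_fun_apply using T(3,4) by (auto simp: hat_def vs_def)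
  qed
  also have "\<dots> \<in> VS.span (hat ` P)"
    using T(2) by (intro VS.span_sum VS.span_scale VS.span_base) auto
  finally show ?thesis .
qed

lemma hat_notin:
  assumes z: "z \<notin> Fl P" and P0: "\<And>v. v \<in> P \<Longrightarrow> v (0, 0) = 0" and z0: "z (0, 0) = 0"
  shows "hat z \<notin> VS.span (hat ` P)"
proof
  assume "hat z \<in> VS.span (hat ` P)"
  then have "\<exists>t r. hat z = (\<Sum>a\<in>t. vs (r a) a) \<and> finite t \<and> t \<subseteq> hat ` P"
    unfolding VS.span_explicit by (simp only: mem_Collect_eq)
  then obtain t r where t: "finite t" "t \<subseteq> hat ` P" "(\<Sum>a\<in>t. vs (r a) a) = hat z"
    by metis
  define unhat where "unhat a = a((0, 0) := 0)" for a :: vect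
  have uh: "unhat (hat v) = v" if "v \<in> P" for v
    using P0[OF that] by (auto simp: unhat_def hat_def fun_eq_iff)
  have hu: "hat (unhat a) = a" if "a \<in> t" for a
    using t(2) that by (auto simp: unhat_def hat_def fun_eq_iff)
  have inj: "inj_on unhat t"
    by (rule inj_on_inverseI[where g = hat]) (rule hu)
  define T where "T = unhat ` t"
  define u where "u w = r (hat w)" for w
  have TP: "T \<subseteq> P" unfolding T_def using t(2) uh by auto
  have sumeq: "(\<Sum>w\<in>T. f w) = (\<Sum>a\<in>t. f (unhat a))" for f :: "vect \<Rightarrow> real"
    unfolding T_def using sum.reindex[OF inj] by simp
  have c00: "(\<Sum>a\<in>t. r a * a (0, 0)) = 1"
    using fun_cong[OF t(3), of "(0,0)"] unfolding sum_fun_apply by (simp add: vs_def hat_def)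
  have a00: "a (0, 0) = 1" if "a \<in> t" for a using t(2) that by (auto simp: hat_def)
  have "sum u T = (\<Sum>a\<in>t. u (unhat a))" by (rule sumeq)
  also have "\<dots> = (\<Sum>a\<in>t. r a * a (0, 0))"
    by (rule sum.cong[OF refl]) (simp add: u_def hu a00)
  also have "\<dots> = 1" by (rule c00)
  finally have "sum u T = 1" .
  moreover have "z = (\<lambda>i. \<Sum>w\<in>T. u w * w i)"
  proof
    fix i
    show "z i = (\<Sum>w\<in>T. u w * w i)"
    proof (cases "i = (0, 0)")
      case True
      have "(\<Sum>w\<in>T. u w * w i) = 0" using TP P0 True by (intro sum.neutral) auto
      then show ?thesis using z0 True by simp
    next
      case False
      have "z i = hat z i" using False by (simp add: hat_def)
      also have "\<dots> = (\<Sum>a\<in>t. r a * a i)"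
        using fun_cong[OF t(3), of i] unfolding sum_fun_apply by (simp add: vs_def)
      also have "\<dots> = (\<Sum>a\<in>t. u (unhat a) * unhat a i)"
        using False hu by (intro sum.cong refl) (auto simp: u_def unhat_def)
      also have "\<dots> = (\<Sum>w\<in>T. u w * w i)" unfolding sumeq ..
      finally show ?thesis .
    qed
  qed
  moreover have "finite T" unfolding T_def using t(1) by simp
  ultimately have "z \<in> Fl P" unfolding Fl_def using TP by blast
  then show False using z by simp
qed


lemma separate:
  assumes nz: "psi k c \<notin> Fl (psi k ` S)"
  shows "\<exists>Q. deg_le Q k \<and> bpeval Q (fst c) (snd c) \<noteq> 0 \<and> psi k -` Fl (psi k ` S) \<subseteq> zero_set Q"
proof -
  define V where "V = hat ` psi k ` S"
  define z where "z = hat (psi k c)"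
  have zn: "z \<notin> VS.span V"
    unfolding z_def V_def by (rule hat_notin[OF nz]) (auto simp: psi_00)
  obtain B where B: "B \<subseteq> V" "VS.independent B" "V \<subseteq> VS.span B"
    by (rule VS.maximal_independent_subset)
  have spanVB: "VS.span V \<subseteq> VS.span B"
    using B(3) by (rule VS.span_minimal) simp
  have zB: "z \<notin> VS.span B"
    using zn VS.span_mono[OF B(1)] by blast
  have ind: "VS.independent (insert z B)"
    by (rule VS.independent_insertI[OF zB B(2)])
  obtain g where g: "Vector_Spaces.linear vs (*) g" "\<forall>x\<in>insert z B. g x = (if x = z then 1 else 0)"
    using VP.linear_independent_extend[OF ind, of "\<lambda>x. if x = z then 1 else 0"] by blast
  have gz: "g z = 1" using g(2) by simp
  have gV: "g x = 0" if "x \<in> VS.span V" for x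
  proof -
    have "x \<in> VS.span B" using that spanVB by blast
    moreover have "g b = 0" if "b \<in> B" for b
    proof -
      have "b \<noteq> z" using that zB VS.span_base by blast
      then show ?thesis using g(2) that by auto
    qed
    ultimately show ?thesis using VP.linear_eq_0_on_span[OF g(1)] by blast
  qed
  define dl :: "nat \<times> nat \<Rightarrow> vect" where "dl p = (\<lambda>q. if q = p then 1 else 0)" for p
  define Q where "Q = (\<Sum>x\<in>Mon k. sc (g (dl x)) (case x of (i, j) \<Rightarrow> mono i j))"
  have hatexp: "hat (psi k (a, b)) = (\<Sum>x\<in>Mon k. vs (case x of (i, j) \<Rightarrow> a ^ i * b ^ j) (dl x))" for a b
  proof
    fix q
    have "(\<Sum>x\<in>Mon k. vs (case x of (i, j) \<Rightarrow> a ^ i * b ^ j) (dl x)) q =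
          (\<Sum>x\<in>Mon k. if x = q then (case q of (i, j) \<Rightarrow> a ^ i * b ^ j) else 0)"
      unfolding sum_fun_apply by (intro sum.cong refl) (auto simp: vs_def dl_def)
    also have "\<dots> = (if q \<in> Mon k then (case q of (i, j) \<Rightarrow> a ^ i * b ^ j) else 0)"
      by (rule sum.delta) simp
    also have "\<dots> = hat (psi k (a, b)) q"
      by (cases q) (auto simp: hat_def psi_def Mon_def)
    finally show "hat (psi k (a, b)) q = (\<Sum>x\<in>Mon k. vs (case x of (i, j) \<Rightarrow> a ^ i * b ^ j) (dl x)) q" by simp
  qed
  have evalQ: "bpeval Q a b = g (hat (psi k (a, b)))" for a b
  proof -
    have "g (hat (psi k (a, b))) = (\<Sum>x\<in>Mon k. g (vs (case x of (i, j) \<Rightarrow> a ^ i * b ^ j) (dl x)))"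
      unfolding hatexp by (rule VP.linear_sum[OF g(1)])
    also have "\<dots> = (\<Sum>x\<in>Mon k. (case x of (i, j) \<Rightarrow> a ^ i * b ^ j) * g (dl x))"
      by (intro sum.cong refl) (rule VP.linear_scale[OF g(1)])
    also have "\<dots> = bpeval Q a b"
      unfolding Q_def bpeval_sum by (intro sum.cong refl) auto
    finally show ?thesis by simp
  qed
  have degQ: "deg_le Q k"
    unfolding Q_def
  proof (rule deg_le_sum)
    fix x assume "x \<in> Mon k"
    then obtain i j where x: "x = (i, j)" "i + j \<le> k" by (auto simp: Mon_def)
    show "deg_le (sc (g (dl x)) (case x of (i, j) \<Rightarrow> mono i j)) k"
      using deg_le_mono[OF deg_le_mono_poly x(2)] x(1) by (simp add: sc_def deg_le_smult)
  qed
  have Qc: "bpeval Q (fst c) (snd c) \<noteq> 0"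
    using evalQ[of "fst c" "snd c"] gz by (simp add: z_def)
  have sub: "psi k -` Fl (psi k ` S) \<subseteq> zero_set Q"
  proof
    fix x assume "x \<in> psi k -` Fl (psi k ` S)"
    then have "hat (psi k x) \<in> VS.span V" unfolding V_def by (simp add: hat_Fl)
    then have "g (hat (psi k x)) = 0" by (rule gV)
    then have "bpeval Q (fst x) (snd x) = 0" using evalQ[of "fst x" "snd x"] by simp
    then show "x \<in> zero_set Q" by (cases x) (simp add: zero_set_def)
  qed
  show ?thesis using degQ Qc sub by blast
qed


lemma piece_bound:
  assumes p: "irreducible p" and C0: "C0 = zero_set p" and c: "c \<in> C0"
    and tp: "totdeg p \<le> d"
    and nz: "psi k c \<notin> Fl (psi k ` S)"
  shows "finite (C0 \<inter> psi k -` Fl (psi k ` S)) \<and> card (C0 \<inter> psi k -` Fl (psi k ` S)) \<le> d * k"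
proof -
  obtain Q where Q: "deg_le Q k" "bpeval Q (fst c) (snd c) \<noteq> 0" "psi k -` Fl (psi k ` S) \<subseteq> zero_set Q"
    using separate[OF nz] by blast
  have Q0: "Q \<noteq> 0" using Q(2) by auto
  have pc: "bpeval p (fst c) (snd c) = 0" using c C0 by (cases c) (auto simp: zero_set_def)
  have nd: "\<not> p dvd Q"
  proof
    assume "p dvd Q"
    then obtain r where "Q = p * r" by blast
    then show False using Q(2) pc by simp
  qed
  have tQ: "totdeg Q \<le> k" using Q(1) totdeg_le_iff[OF Q0] by simp
  have bz: "finite (zero_set p \<inter> zero_set Q)" "card (zero_set p \<inter> zero_set Q) \<le> totdeg p * totdeg Q"
    using bezout[OF p nd] by blast+
  have sub: "C0 \<inter> psi k -` Fl (psi k ` S) \<subseteq> zero_set p \<inter> zero_set Q" using C0 Q(3) by blast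
  have "card (C0 \<inter> psi k -` Fl (psi k ` S)) \<le> card (zero_set p \<inter> zero_set Q)"
    by (rule card_mono[OF bz(1) sub])
  also have "\<dots> \<le> totdeg p * totdeg Q" by (rule bz(2))
  also have "\<dots> \<le> d * k" using tp tQ by (rule mult_le_mono)
  finally show ?thesis using finite_subset[OF sub bz(1)] by blast
qed

theorem lemma27:
  fixes d f :: nat and C0 B :: "(real \<times> real) set"
  assumes "d \<ge> 1" and "f \<le> d - 1"
    and "C0 \<in> curves_le d" and "irreducible_curve C0"
    and "finite B" and "card B \<le> ((d + 2) choose 2) - 1"
  shows "\<forall>(e, D) \<in> Iset d B C0. finite (C0 \<inter> Uset d e B D) \<and>
           card (C0 \<inter> Uset d e B D) \<le> 2 * d ^ 2"
proof -
  obtain q where q: "q \<noteq> 0" "totdeg q \<le> d" "C0 = zero_set q"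
    using assms(3) unfolding curves_le_def curves_deg_def by auto
  obtain p where p: "irreducible p" "C0 = zero_set p"
    using assms(4) unfolding irreducible_curve_def by auto
  have main: "finite (C0 \<inter> Uset d e B D) \<and> card (C0 \<inter> Uset d e B D) \<le> 2 * d ^ 2"
    if eD: "(e, D) \<in> Iset d B C0" for e D
  proof -
    have e: "1 \<le> e" "e \<le> d - 1" and DB: "D \<subseteq> B" and nsub: "\<not> C0 \<subseteq> Uset d e B D"
      using eD unfolding Iset_def by auto
    obtain c where c: "c \<in> C0" "c \<notin> Uset d e B D" using nsub by blast
    show ?thesis
    proof (cases "finite C0")
      case True
      have "card (C0 \<inter> Uset d e B D) \<le> card C0" using True by (intro card_mono) auto
      also have "\<dots> \<le> totdeg q ^ 2" using finite_zero_bound[OF q(1)] True q(3) by simp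
      also have "\<dots> \<le> d ^ 2" using q(2) by (rule power_mono) simp
      finally show ?thesis using True by simp
    next
      case inf: False
      have pq: "p dvd q"
      proof (rule ccontr)
        assume "\<not> p dvd q"
        then have "finite (zero_set p \<inter> zero_set q)" using bezout[OF p(1)] by blast
        then show False using inf p(2) q(3) by simp
      qed
      have tp: "totdeg p \<le> d" using totdeg_dvd[OF pq q(1)] q(2) by simp
      note pb = piece_bound[OF p(1) p(2) c(1) tp]
      define X1 where "X1 = psi d -` Vset d B"
      define X2 where "X2 = psi e -` Vset e D"
      define X3 where "X3 = psi (d - e) -` Wset d e B D"
      have b1: "finite (C0 \<inter> X1) \<and> card (C0 \<inter> X1) \<le> d * d" if "c \<notin> X1"
        using pb[of d B] that unfolding X1_def Vset_def by auto
      have b2: "finite (C0 \<inter> X2) \<and> card (C0 \<inter> X2) \<le> d * e" if "c \<notin> X2"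
        using pb[of e D] that unfolding X2_def Vset_def by auto
      have b3: "finite (C0 \<inter> X3) \<and> card (C0 \<inter> X3) \<le> d * (d - e)" if "c \<notin> X3"
        using pb[of "d - e" "B - psi e -` Vset e D"] that unfolding X3_def Wset_def by auto
      have ed: "d * e + d * (d - e) = d * d" using e
        by (metis add_diff_inverse_nat diff_le_self le_trans add_mult_distrib2 not_less)
      have dd: "d * d = d ^ 2" by (simp add: power2_eq_square)
      show ?thesis
      proof (cases "alpha e D < 0")
        case True
        then have U: "Uset d e B D = X1" unfolding Uset_def X1_def by simp
        then show ?thesis using b1 c(2) dd by simp
      next
        case a: False
        show ?thesis
        proof (cases "beta d e B D < 0")
          case True
          then have U: "Uset d e B D = X1 \<union> X2" unfolding Uset_def X1_def X2_def using a by simp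
          have "card (C0 \<inter> Uset d e B D) \<le> card (C0 \<inter> X1) + card (C0 \<inter> X2)"
            unfolding U Int_Un_distrib by (rule card_Un_le)
          also have "\<dots> \<le> d * d + d * e" using b1 b2 c(2) U by (intro add_mono) auto
          also have "\<dots> \<le> 2 * d ^ 2" using ed dd by linarith
          finally show ?thesis using b1 b2 c(2) U by (simp add: Int_Un_distrib)
        next
          case False
          then have U: "Uset d e B D = X1 \<union> X2 \<union> X3"
            unfolding Uset_def X1_def X2_def X3_def using a by simp
          have "card (C0 \<inter> Uset d e B D) \<le> card (C0 \<inter> X1 \<union> C0 \<inter> X2) + card (C0 \<inter> X3)"
            unfolding U Int_Un_distrib by (rule card_Un_le)
          also have "\<dots> \<le> (card (C0 \<inter> X1) + card (C0 \<inter> X2)) + card (C0 \<inter> X3)"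
            by (intro add_mono card_Un_le) simp
          also have "\<dots> \<le> (d * d + d * e) + d * (d - e)" using b1 b2 b3 c(2) U by (intro add_mono) auto
          also have "\<dots> = 2 * d ^ 2" using ed dd by linarith
          finally show ?thesis using b1 b2 b3 c(2) U by (simp add: Int_Un_distrib)
        qed
      qed
    qed
  qed
  show ?thesis using main by blast
qed


end
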